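(* Let $T$ be a tree and let $S$ be a covering strategy for $T$ with $k$ robots (at prescribed starting vertices) of minimum length among all such covering strategies. If an edge $(x,y)$ of $T$ is traversed by at least two different robots in $S$, then all robots that traverse $(x,y)$ traverse it in the same direction (either all from $x$ to $y$, or all from $y$ to $x$).
   Context: A walk in $T$ is a sequence $W=(u_1,\dots,u_m)$ of vertices in which consecutive terms are equal or adjacent; it traverses edge $(x,y)$ from $x$ to $y$ when $u_i=x,u_{i+1}=y$ for some $i$. Its length is the number of indices $i$ with $u_i\neq u_{i+1}$. A strategy with $k$ robots is a $k$-tuple of walks, walk $i$ starting at robot $i$'s prescribed starting vertex; it is covering if every vertex of $T$ is in some walk; its length is the sum of the lengths of its walks. *)

theory Defs
  imports Main
begin

definition graph :: "'a set \<Rightarrow> ('a \<Rightarrow> 'a \<Rightarrow> bool) \<Rightarrow> bool" where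
  "graph V E \<longleftrightarrow> finite V \<and> (\<forall>x y. E x y \<longrightarrow> x \<in> V \<and> y \<in> V) \<and>
     (\<forall>x y. E x y \<longrightarrow> E y x) \<and> (\<forall>x. \<not> E x x)"

definition is_path :: "('a \<Rightarrow> 'a \<Rightarrow> bool) \<Rightarrow> 'a list \<Rightarrow> bool" where
  "is_path E p \<longleftrightarrow> p \<noteq> [] \<and> (\<forall>i. Suc i < length p \<longrightarrow> E (p ! i) (p ! Suc i))"

definition connected_graph :: "'a set \<Rightarrow> ('a \<Rightarrow> 'a \<Rightarrow> bool) \<Rightarrow> bool" where
  "connected_graph V E \<longleftrightarrow> V \<noteq> {} \<and>
     (\<forall>x\<in>V. \<forall>y\<in>V. \<exists>p. is_path E p \<and> hd p = x \<and> last p = y)"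

definition is_cycle :: "('a \<Rightarrow> 'a \<Rightarrow> bool) \<Rightarrow> 'a list \<Rightarrow> bool" where
  "is_cycle E c \<longleftrightarrow> length c \<ge> 3 \<and> distinct c \<and> is_path E c \<and> E (last c) (hd c)"

definition tree :: "'a set \<Rightarrow> ('a \<Rightarrow> 'a \<Rightarrow> bool) \<Rightarrow> bool" where
  "tree V E \<longleftrightarrow> graph V E \<and> connected_graph V E \<and> (\<nexists>c. is_cycle E c)"

definition is_walk :: "'a set \<Rightarrow> ('a \<Rightarrow> 'a \<Rightarrow> bool) \<Rightarrow> 'a list \<Rightarrow> bool" where
  "is_walk V E w \<longleftrightarrow> w \<noteq> [] \<and> set w \<subseteq> V \<and>
     (\<forall>i. Suc i < length w \<longrightarrow> w ! i = w ! Suc i \<or> E (w ! i) (w ! Suc i))"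

definition traverses :: "'a list \<Rightarrow> 'a \<Rightarrow> 'a \<Rightarrow> bool" where
  "traverses w x y \<longleftrightarrow> (\<exists>i. Suc i < length w \<and> w ! i = x \<and> w ! Suc i = y)"

definition walk_length :: "'a list \<Rightarrow> nat" where
  "walk_length w = card {i. Suc i < length w \<and> w ! i \<noteq> w ! Suc i}"

definition is_strategy :: "'a set \<Rightarrow> ('a \<Rightarrow> 'a \<Rightarrow> bool) \<Rightarrow> nat \<Rightarrow> (nat \<Rightarrow> 'a) \<Rightarrow> (nat \<Rightarrow> 'a list) \<Rightarrow> bool" where
  "is_strategy V E k s W \<longleftrightarrow> (\<forall>i<k. is_walk V E (W i) \<and> hd (W i) = s i)"

definition covering :: "'a set \<Rightarrow> nat \<Rightarrow> (nat \<Rightarrow> 'a list) \<Rightarrow> bool" where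
  "covering V k W \<longleftrightarrow> V \<subseteq> (\<Union>i<k. set (W i))"

definition strategy_length :: "nat \<Rightarrow> (nat \<Rightarrow> 'a list) \<Rightarrow> nat" where
  "strategy_length k W = (\<Sum>i<k. walk_length (W i))"

end

theory Submission
  imports Defs
begin

fun wl :: "'a list \<Rightarrow> nat" where
  "wl (a#b#t) = (if a \<noteq> b then 1 else 0) + wl (b#t)"
| "wl _ = 0"

lemma walk_length_wl: "walk_length w = wl w"
proof (induction w rule: wl.induct)
  case (1 a b t)
  let ?S = "{i. Suc i < length (b#t) \<and> (b#t) ! i \<noteq> (b#t) ! Suc i}"
  have eq: "{i. Suc i < length (a#b#t) \<and> (a#b#t) ! i \<noteq> (a#b#t) ! Suc i}
        = (if a \<noteq> b then {0} else {}) \<union> Suc ` ?S"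
    apply (rule set_eqI)
    subgoal for i by (cases i) auto
    done
  have fin: "finite ?S" by (rule finite_subset[of _ "{..<length (b#t)}"]) auto
  have "0 \<notin> Suc ` ?S" by auto
  then have "card ((if a \<noteq> b then {0} else {}) \<union> Suc ` ?S) = (if a \<noteq> b then 1 else 0) + card (Suc ` ?S)"
    using fin by (auto simp: card_insert_if)
  also have "card (Suc ` ?S) = card ?S" by (rule card_image) auto
  finally have c: "card ((if a \<noteq> b then {0} else {}) \<union> Suc ` ?S) = (if a \<noteq> b then 1 else 0) + card ?S" .
  have "walk_length (a#b#t) = card ((if a \<noteq> b then {0} else {}) \<union> Suc ` ?S)"
    unfolding walk_length_def by (rule arg_cong[where f=card], rule eq)
  moreover have "walk_length (b#t) = card ?S" by (simp only: walk_length_def)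
  ultimately show ?case using 1 c by simp
next
  case "2_1" then show ?case by (simp add: walk_length_def)
next
  case "2_2" then show ?case by (simp add: walk_length_def)
qed

lemma wl_split: "wl (xs @ z # ys) = wl (xs @ [z]) + wl (z # ys)"
proof (induction xs rule: wl.induct)
  case (1 a b t) then show ?case by simp
next
  case "2_1" then show ?case by simp
next
  case ("2_2" a) then show ?case by (cases ys) auto
qed

lemma trav_split: "traverses w x y \<Longrightarrow> \<exists>A B. w = A @ x # y # B"
proof -
  assume "traverses w x y"
  then obtain n where n: "Suc n < length w" "w ! n = x" "w ! Suc n = y"
    unfolding traverses_def by blast
  have "w = take n w @ drop n w" by simp
  also have "drop n w = x # y # drop (Suc (Suc n)) w"
    using n by (metis Cons_nth_drop_Suc Suc_lessD)
  finally show ?thesis by blast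
qed

lemma walk_iff: "is_walk V E w \<longleftrightarrow> w \<noteq> [] \<and> set w \<subseteq> V \<and> successively (\<lambda>a b. a = b \<or> E a b) w"
  unfolding is_walk_def successively_conv_nth by auto

lemma swap_main:
  assumes strat: "is_strategy V E k s W" and cov: "covering V k W"
    and minl: "\<forall>W'. is_strategy V E k s W' \<and> covering V k W' \<longrightarrow>
               strategy_length k W \<le> strategy_length k W'"
    and xy: "x \<noteq> y" and ik: "i < k" and jk: "j < k" and ij: "i \<noteq> j"
    and ti: "traverses (W i) x y" and tj: "traverses (W j) y x"
  shows False
proof -
  obtain A B where AB: "W i = A @ x # y # B" using trav_split[OF ti] by blast
  obtain C D where CD: "W j = C @ y # x # D" using trav_split[OF tj] by blast
  define W' where "W' = W(i := A @ x # D, j := C @ y # B)"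
  have wi: "is_walk V E (W i)" "hd (W i) = s i" using strat ik unfolding is_strategy_def by auto
  have wj: "is_walk V E (W j)" "hd (W j) = s j" using strat jk unfolding is_strategy_def by auto
  have w1: "is_walk V E (A @ x # D)"
    using wi(1) wj(1) unfolding AB CD walk_iff
    by (auto simp: successively_append_iff)
  have w2: "is_walk V E (C @ y # B)"
    using wi(1) wj(1) unfolding AB CD walk_iff
    by (auto simp: successively_append_iff)
  have h1: "hd (A @ x # D) = s i" using wi(2) unfolding AB by (cases A) auto
  have h2: "hd (C @ y # B) = s j" using wj(2) unfolding CD by (cases C) auto
  have st: "is_strategy V E k s W'"
    using strat w1 w2 h1 h2 ij unfolding is_strategy_def W'_def by auto
  have "set (W i) \<union> set (W j) = set (W' i) \<union> set (W' j)"
    unfolding W'_def AB CD using ij by auto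
  then have "(\<Union>l<k. set (W l)) \<subseteq> (\<Union>l<k. set (W' l))"
  proof -
    assume U: "set (W i) \<union> set (W j) = set (W' i) \<union> set (W' j)"
    have "set (W l) \<subseteq> (\<Union>l<k. set (W' l))" if "l < k" for l
    proof (cases "l = i \<or> l = j")
      case True
      have "set (W l) \<subseteq> set (W' i) \<union> set (W' j)" using True U by auto
      moreover have "set (W' i) \<union> set (W' j) \<subseteq> (\<Union>l<k. set (W' l))" using ik jk by auto
      ultimately show ?thesis by (rule subset_trans)
    next
      case False then have "W' l = W l" unfolding W'_def by simp
      then show ?thesis using that by auto
    qed
    then show ?thesis by (simp add: UN_subset_iff)
  qed
  then have cv: "covering V k W'" using cov unfolding covering_def by (meson subset_trans)
  have len: "\<And>f :: nat \<Rightarrow> nat. sum f {..<k} = f i + f j + sum f ({..<k} - {i} - {j})"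
  proof -
    fix f :: "nat \<Rightarrow> nat"
    have "sum f {..<k} = f i + sum f ({..<k} - {i})" using ik by (simp add: sum.remove)
    also have "sum f ({..<k} - {i}) = f j + sum f ({..<k} - {i} - {j})"
      using jk ij by (subst sum.remove[of _ j]) auto
    finally show "sum f {..<k} = f i + f j + sum f ({..<k} - {i} - {j})" by simp
  qed
  have rest: "sum (\<lambda>l. walk_length (W' l)) ({..<k} - {i} - {j}) = sum (\<lambda>l. walk_length (W l)) ({..<k} - {i} - {j})"
    by (rule sum.cong) (auto simp: W'_def)
  have Li: "wl (W i) = wl (A @ [x]) + 1 + wl (y # B)"
    unfolding AB using wl_split[of A x "y # B"] xy by simp
  have Lj: "wl (W j) = wl (C @ [y]) + 1 + wl (x # D)"
    unfolding CD using wl_split[of C y "x # D"] xy by simp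
  have Li': "wl (W' i) = wl (A @ [x]) + wl (x # D)"
    unfolding W'_def using ij wl_split[of A x D] by simp
  have Lj': "wl (W' j) = wl (C @ [y]) + wl (y # B)"
    unfolding W'_def using wl_split[of C y B] by simp
  have "strategy_length k W' + 2 = strategy_length k W"
    unfolding strategy_length_def
    using len[of "\<lambda>l. walk_length (W' l)"] len[of "\<lambda>l. walk_length (W l)"]
      rest Li Lj Li' Lj' by (simp add: walk_length_wl)
  moreover have "strategy_length k W \<le> strategy_length k W'" using minl st cv by blast
  ultimately show False by simp
qed

theorem lemma3:
  fixes V :: "'a set" and E :: "'a \<Rightarrow> 'a \<Rightarrow> bool" and k :: nat
    and s :: "nat \<Rightarrow> 'a" and W :: "nat \<Rightarrow> 'a list" and x y :: 'a
  assumes "tree V E"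
    and "\<forall>i<k. s i \<in> V"
    and "is_strategy V E k s W" and "covering V k W"
    and "\<forall>W'. is_strategy V E k s W' \<and> covering V k W' \<longrightarrow>
               strategy_length k W \<le> strategy_length k W'"
    and "E x y"
    and "\<exists>i<k. \<exists>j<k. i \<noteq> j \<and> (traverses (W i) x y \<or> traverses (W i) y x)
                            \<and> (traverses (W j) x y \<or> traverses (W j) y x)"
  shows "(\<forall>i<k. \<not> traverses (W i) y x) \<or> (\<forall>i<k. \<not> traverses (W i) x y)"
proof (rule ccontr)
  assume "\<not> ?thesis"
  then obtain a b where a: "a < k" "traverses (W a) y x" and b: "b < k" "traverses (W b) x y"
    by blast
  have xy: "x \<noteq> y" using assms(1,6) unfolding tree_def graph_def by metis
  have sw: "\<And>i j. i < k \<Longrightarrow> j < k \<Longrightarrow> i \<noteq> j \<Longrightarrow> traverses (W i) x y \<Longrightarrow> traverses (W j) y x \<Longrightarrow> False"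
    using swap_main[OF assms(3,4,5) xy] by blast
  obtain i j where ij: "i < k" "j < k" "i \<noteq> j"
    "traverses (W i) x y \<or> traverses (W i) y x" "traverses (W j) x y \<or> traverses (W j) y x"
    using assms(7) by blast
  show False
  proof (cases "a = b")
    case False then show False using sw a b by metis
  next
    case True
    obtain c where c: "c < k" "c \<noteq> a" "traverses (W c) x y \<or> traverses (W c) y x"
      using ij by metis
    then show False using sw a b True by metis
  qed
qed

end
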